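(* Let $C, A \subseteq \omega$ with $A \not\leq_T C$. Then every condition has an acceptable part. Moreover, for every condition $c$ and every $m \in \omega$ there is a condition $d$ extending $c$ such that $d$ forces $Q_m$ on each of its acceptable parts.
   Context: Fix sets $C, A \subseteq \omega$. For $\sigma \in 2^{<\omega}$ and $X \in 2^\omega$ (or a string of length at least $|\sigma|$), $X/\sigma$ denotes the result of replacing the first $|\sigma|$ bits of $X$ by $\sigma$; strings and elements of $2^\omega$ are identified with (finite or infinite) subsets of $\omega$. A Mathias condition is a pair $(\sigma, X)$ with $\sigma \in 2^{<\omega}$, $X \in 2^\omega$; $(\tau,Y)$ extends $(\sigma,X)$ if $\sigma \preceq \tau$ and $Y/\tau \subseteq X/\sigma$; a set $G$ satisfies $(\sigma,X)$ if $\sigma \prec G$ and $G \subseteq X/\sigma$. A set $X = X_0 \oplus \cdots \oplus X_{k-1}$ codes an ordered $k$-partition of $\omega$ if $\bigcup_{i<k} X_i = \omega$ (the parts need not be disjoint). A condition is a tuple $c = (k, \sigma_0, \ldots, \sigma_{k-1}, P)$ with $k > 0$, each $\sigma_i \in 2^{<\omega}$, and $P$ a non-empty $\Pi^{0,C}_1$ class each of whose members codes an ordered $k$-partition of $\omega$. A condition $d = (m, \tau_0,\ldots,\tau_{m-1}, Q)$ extends $c$ if there is a function $f : m \to k$ such that for every $Y_0 \oplus \cdots \oplus Y_{m-1} \in Q$ there is $X_0 \oplus \cdots \oplus X_{k-1} \in P$ such that for each $i<m$ the Mathias condition $(\tau_i, Y_i)$ extends $(\sigma_{f(i)}, X_{f(i)})$.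 A set $G$ satisfies $c$ on part $i$ if there is $X_0\oplus\cdots\oplus X_{k-1} \in P$ with $G$ satisfying $(\sigma_i, X_i)$. Part $i$ of $c$ is acceptable if there is $X_0 \oplus \cdots \oplus X_{k-1} \in P$ such that $X_i \cap A$ and $X_i \cap \overline{A}$ are both infinite. The condition $c$ forces $Q_m$ on part $i$ if $|\sigma_i \cap A| \geq m$ and $|\sigma_i \cap \overline{A}| \geq m$ (with $\sigma_i$ viewed as a finite set). *)

theory Defs
  imports Main "HOL-Library.Nat_Bijection" "HOL-Library.Sublist"
begin

datatype rf =
    Zer
  | Suc_f
  | Lft
  | Rgt
  | Orc
  | Comp rf rf
  | Pair rf rf
  | Prec rf rf
  | Mu rf

inductive eval :: "nat set \<Rightarrow> rf \<Rightarrow> nat \<Rightarrow> nat \<Rightarrow> bool" for Or :: "nat set" where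
  ev_zer: "eval Or Zer x 0"
| ev_suc: "eval Or Suc_f x (Suc x)"
| ev_lft: "eval Or Lft x (fst (prod_decode x))"
| ev_rgt: "eval Or Rgt x (snd (prod_decode x))"
| ev_orc: "eval Or Orc x (if x \<in> Or then 1 else 0)"
| ev_comp: "eval Or g x y \<Longrightarrow> eval Or f y z \<Longrightarrow> eval Or (Comp f g) x z"
| ev_pair: "eval Or f x y \<Longrightarrow> eval Or g x z \<Longrightarrow> eval Or (Pair f g) x (prod_encode (y, z))"
| ev_prec0: "eval Or f y z \<Longrightarrow> eval Or (Prec f g) (prod_encode (y, 0)) z"
| ev_precS: "eval Or (Prec f g) (prod_encode (y, n)) r \<Longrightarrow>
             eval Or g (prod_encode (y, prod_encode (n, r))) z \<Longrightarrow>
             eval Or (Prec f g) (prod_encode (y, Suc n)) z"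
| ev_mu: "eval Or f (prod_encode (x, n)) 0 \<Longrightarrow>
          (\<forall>i<n. \<exists>v. eval Or f (prod_encode (x, i)) v \<and> v \<noteq> 0) \<Longrightarrow>
          eval Or (Mu f) x n"

definition computable_in :: "nat set \<Rightarrow> (nat \<Rightarrow> nat) \<Rightarrow> bool" where
  "computable_in Or h \<longleftrightarrow> (\<exists>p. \<forall>x. eval Or p x (h x))"

definition chi :: "nat set \<Rightarrow> nat \<Rightarrow> nat" where
  "chi S x = (if x \<in> S then 1 else 0)"

definition turing_le :: "nat set \<Rightarrow> nat set \<Rightarrow> bool" where
  "turing_le A C \<longleftrightarrow> computable_in C (chi A)"

text \<open>Strings are bool lists; a canonical bijective coding of strings by naturals.\<close>
fun strcode :: "bool list \<Rightarrow> nat" where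
  "strcode [] = 0"
| "strcode (b # bs) = Suc (2 * strcode bs + (if b then 1 else 0))"

definition init_seg :: "nat set \<Rightarrow> nat \<Rightarrow> bool list" where
  "init_seg X n = map (\<lambda>i. i \<in> X) [0..<n]"

definition pi01_class :: "nat set \<Rightarrow> nat set set \<Rightarrow> bool" where
  "pi01_class C P \<longleftrightarrow>
     (\<exists>T. computable_in C (chi T) \<and> P = {X. \<forall>n. strcode (init_seg X n) \<in> T})"

definition str_set :: "bool list \<Rightarrow> nat set" where
  "str_set \<sigma> = {n. n < length \<sigma> \<and> \<sigma> ! n}"

definition repl :: "nat set \<Rightarrow> bool list \<Rightarrow> nat set" where
  "repl X \<sigma> = {n. if n < length \<sigma> then \<sigma> ! n else n \<in> X}"

definition mathias_ext :: "bool list \<Rightarrow> nat set \<Rightarrow> bool list \<Rightarrow> nat set \<Rightarrow> bool" where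
  "mathias_ext \<tau> Y \<sigma> X \<longleftrightarrow> prefix \<sigma> \<tau> \<and> repl Y \<tau> \<subseteq> repl X \<sigma>"

text \<open>Part i of X = X_0 \<oplus> ... \<oplus> X_{k-1}: X_i = {n. k*n+i \<in> X}.\<close>
definition part :: "nat \<Rightarrow> nat set \<Rightarrow> nat \<Rightarrow> nat set" where
  "part k X i = {n. k * n + i \<in> X}"

definition codes_partition :: "nat \<Rightarrow> nat set \<Rightarrow> bool" where
  "codes_partition k X \<longleftrightarrow> (\<Union>i<k. part k X i) = UNIV"

type_synonym cond = "nat \<times> bool list list \<times> nat set set"

definition is_condition :: "nat set \<Rightarrow> cond \<Rightarrow> bool" where
  "is_condition C c \<longleftrightarrow> (case c of (k, \<sigma>s, P) \<Rightarrow>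
     k > 0 \<and> length \<sigma>s = k \<and> P \<noteq> {} \<and> pi01_class C P \<and>
     (\<forall>X\<in>P. codes_partition k X))"

definition cond_extends :: "cond \<Rightarrow> cond \<Rightarrow> bool" where
  "cond_extends d c \<longleftrightarrow> (case d of (m, \<tau>s, Q) \<Rightarrow> case c of (k, \<sigma>s, P) \<Rightarrow>
     (\<exists>f. (\<forall>i<m. f i < k) \<and>
        (\<forall>Y\<in>Q. \<exists>X\<in>P. \<forall>i<m.
           mathias_ext (\<tau>s ! i) (part m Y i) (\<sigma>s ! (f i)) (part k X (f i)))))"

definition acceptable_part :: "nat set \<Rightarrow> cond \<Rightarrow> nat \<Rightarrow> bool" where
  "acceptable_part A c i \<longleftrightarrow> (case c of (k, \<sigma>s, P) \<Rightarrow>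
     i < k \<and> (\<exists>X\<in>P. infinite (part k X i \<inter> A) \<and> infinite (part k X i - A)))"

definition forces_Q :: "nat set \<Rightarrow> cond \<Rightarrow> nat \<Rightarrow> nat \<Rightarrow> bool" where
  "forces_Q A c i m \<longleftrightarrow> (case c of (k, \<sigma>s, P) \<Rightarrow>
     card (str_set (\<sigma>s ! i) \<inter> A) \<ge> m \<and> card (str_set (\<sigma>s ! i) - A) \<ge> m)"

end

theory Submission
  imports Defs
begin


abbreviation comp :: "nat set \<Rightarrow> (nat \<Rightarrow> nat) \<Rightarrow> bool" where
  "comp C h \<equiv> computable_in C h"

fun prr :: "(nat\<Rightarrow>nat) \<Rightarrow> (nat\<Rightarrow>nat) \<Rightarrow> nat \<Rightarrow> nat \<Rightarrow> nat" where
  "prr f g y 0 = f y"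
| "prr f g y (Suc n) = g (prod_encode (y, prod_encode (n, prr f g y n)))"

lemma comp_const: "comp C (\<lambda>x. c)"
proof (induction c)
  case 0
  show ?case unfolding computable_in_def by (rule exI[of _ Zer]) (auto intro: eval.intros)
next
  case (Suc c)
  then obtain p where p: "\<forall>x. eval C p x c" unfolding computable_in_def by auto
  show ?case unfolding computable_in_def
    by (rule exI[of _ "Comp Suc_f p"]) (metis ev_comp ev_suc p)
qed

lemma comp_Suc: "comp C Suc"
  unfolding computable_in_def by (rule exI[of _ Suc_f]) (auto intro: eval.intros)

lemma comp_fst0: "comp C (\<lambda>x. fst (prod_decode x))"
  unfolding computable_in_def by (rule exI[of _ Lft]) (auto intro: eval.intros)

lemma comp_snd0: "comp C (\<lambda>x. snd (prod_decode x))"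
  unfolding computable_in_def by (rule exI[of _ Rgt]) (auto intro: eval.intros)

lemma comp_oracle0: "comp C (chi C)"
  unfolding computable_in_def chi_def by (rule exI[of _ Orc]) (metis ev_orc)

lemma comp_compose: "comp C f \<Longrightarrow> comp C g \<Longrightarrow> comp C (\<lambda>x. f (g x))"
  unfolding computable_in_def
proof -
  assume "\<exists>p. \<forall>x. eval C p x (f x)" "\<exists>p. \<forall>x. eval C p x (g x)"
  then obtain p q where p: "\<forall>x. eval C p x (f x)" and q: "\<forall>x. eval C q x (g x)" by auto
  show "\<exists>p. \<forall>x. eval C p x (f (g x))"
    by (rule exI[of _ "Comp p q"]) (metis ev_comp p q)
qed

lemma comp_pair: "comp C f \<Longrightarrow> comp C g \<Longrightarrow> comp C (\<lambda>x. prod_encode (f x, g x))"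
  unfolding computable_in_def
proof -
  assume "\<exists>p. \<forall>x. eval C p x (f x)" "\<exists>p. \<forall>x. eval C p x (g x)"
  then obtain p q where p: "\<forall>x. eval C p x (f x)" and q: "\<forall>x. eval C q x (g x)" by auto
  show "\<exists>p. \<forall>x. eval C p x (prod_encode (f x, g x))"
    by (rule exI[of _ "Pair p q"]) (metis ev_pair p q)
qed

lemma comp_prr: "comp C f \<Longrightarrow> comp C g \<Longrightarrow>
   comp C (\<lambda>x. prr f g (fst (prod_decode x)) (snd (prod_decode x)))"
  unfolding computable_in_def
proof -
  assume "\<exists>p. \<forall>x. eval C p x (f x)" "\<exists>p. \<forall>x. eval C p x (g x)"
  then obtain p q where p: "\<forall>x. eval C p x (f x)" and q: "\<forall>x. eval C q x (g x)" by auto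
  have e: "eval C (Prec p q) (prod_encode (y, n)) (prr f g y n)" for y n
    proof (induction n)
    case 0 show ?case using p by (simp only: prr.simps) (metis ev_prec0)
  next
    case (Suc n) show ?case using Suc q by (simp only: prr.simps) (metis ev_precS)
  qed
  show "\<exists>r. \<forall>x. eval C r x (prr f g (fst (prod_decode x)) (snd (prod_decode x)))"
  proof (rule exI[of _ "Prec p q"], intro allI)
    fix x
    show "eval C (Prec p q) x (prr f g (fst (prod_decode x)) (snd (prod_decode x)))"
      using e[of "fst (prod_decode x)" "snd (prod_decode x)"] by simp
  qed
qed

lemma comp_mu0: "comp C h \<Longrightarrow> (\<forall>x. \<exists>n. h (prod_encode (x, n)) = 0) \<Longrightarrow>
   comp C (\<lambda>x. LEAST n. h (prod_encode (x, n)) = 0)"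
  unfolding computable_in_def
proof -
  assume "\<exists>p. \<forall>x. eval C p x (h x)" and ex: "\<forall>x. \<exists>n. h (prod_encode (x, n)) = 0"
  then obtain p where p: "\<forall>x. eval C p x (h x)" by auto
  show "\<exists>r. \<forall>x. eval C r x (LEAST n. h (prod_encode (x, n)) = 0)"
  proof (rule exI[of _ "Mu p"], intro allI)
    fix x
    obtain n0 where n0: "h (prod_encode (x, n0)) = 0" using ex by auto
    let ?n = "LEAST n. h (prod_encode (x, n)) = 0"
    have z: "h (prod_encode (x, ?n)) = 0" using n0 by (rule LeastI)
    have nz: "\<forall>i<?n. \<exists>v. eval C p (prod_encode (x, i)) v \<and> v \<noteq> 0"
      using not_less_Least p by blast
    show "eval C (Mu p) x ?n"
      using p z nz by (intro ev_mu) (metis, metis)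
  qed
qed

lemma comp_bin: "comp C (\<lambda>p. F (fst (prod_decode p)) (snd (prod_decode p))) \<Longrightarrow> comp C f \<Longrightarrow> comp C g \<Longrightarrow>
   comp C (\<lambda>x. F (f x) (g x))"
  using comp_compose[of C "\<lambda>p. F (fst (prod_decode p)) (snd (prod_decode p))" "\<lambda>x. prod_encode (f x, g x)"]
    comp_pair[of C f g] by simp

lemma comp_id: "comp C (\<lambda>x. x)"
proof -
  have "comp C (\<lambda>x. prr (\<lambda>_. 0) (\<lambda>q. fst (prod_decode (snd (prod_decode q)))) (fst (prod_decode x)) (snd (prod_decode x)))"
    by (rule comp_prr[OF comp_const]) (rule comp_compose[OF comp_fst0 comp_snd0])
  moreover have "prr (\<lambda>_. 0) (\<lambda>q. fst (prod_decode (snd (prod_decode q)))) y n = n - 1" for y n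
    by (cases n) auto
  ultimately have "comp C (\<lambda>x. snd (prod_decode x) - 1)" by simp
  from comp_compose[OF this comp_pair[OF comp_const comp_Suc]]
  show ?thesis by simp
qed

lemma comp_Suc1: "comp C f \<Longrightarrow> comp C (\<lambda>x. Suc (f x))"
  by (rule comp_compose[OF comp_Suc])

lemma comp_fst: "comp C f \<Longrightarrow> comp C (\<lambda>x. fst (prod_decode (f x)))"
  by (rule comp_compose[OF comp_fst0])
lemma comp_snd: "comp C f \<Longrightarrow> comp C (\<lambda>x. snd (prod_decode (f x)))"
  by (rule comp_compose[OF comp_snd0])
lemma comp_pe: "comp C f \<Longrightarrow> comp C g \<Longrightarrow> comp C (\<lambda>x. prod_encode (f x, g x))"
  by (rule comp_pair)

lemma comp_add: "comp C f \<Longrightarrow> comp C g \<Longrightarrow> comp C (\<lambda>x. f x + g x)"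
proof -
  have "comp C (\<lambda>x. prr (\<lambda>y. y) (\<lambda>q. Suc (snd (prod_decode (snd (prod_decode q))))) (fst (prod_decode x)) (snd (prod_decode x)))"
    by (rule comp_prr[OF comp_id]) (rule comp_compose[OF comp_Suc comp_snd[OF comp_snd0]])
  moreover have "prr (\<lambda>y. y) (\<lambda>q. Suc (snd (prod_decode (snd (prod_decode q))))) y n = y + n" for y n
    by (induction n) auto
  ultimately have "comp C (\<lambda>p. fst (prod_decode p) + snd (prod_decode p))" by simp
  thus "comp C f \<Longrightarrow> comp C g \<Longrightarrow> comp C (\<lambda>x. f x + g x)" by (rule comp_bin)
qed

lemma comp_pred: "comp C f \<Longrightarrow> comp C (\<lambda>x. f x - 1)"
proof -
  have "comp C (\<lambda>x. prr (\<lambda>_. 0) (\<lambda>q. fst (prod_decode (snd (prod_decode q)))) (fst (prod_decode x)) (snd (prod_decode x)))"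
    by (rule comp_prr[OF comp_const]) (rule comp_compose[OF comp_fst0 comp_snd0])
  moreover have "prr (\<lambda>_. 0) (\<lambda>q. fst (prod_decode (snd (prod_decode q)))) y n = n - 1" for y n
    by (cases n) auto
  ultimately have "comp C (\<lambda>x. snd (prod_decode x) - 1)" by simp
  from comp_compose[OF this comp_pair[OF comp_const]]
  show "comp C f \<Longrightarrow> comp C (\<lambda>x. f x - 1)" by simp
qed

lemma comp_sub: "comp C f \<Longrightarrow> comp C g \<Longrightarrow> comp C (\<lambda>x. f x - g x)"
proof -
  have "comp C (\<lambda>x. prr (\<lambda>y. y) (\<lambda>q. snd (prod_decode (snd (prod_decode q))) - 1) (fst (prod_decode x)) (snd (prod_decode x)))"
    by (rule comp_prr[OF comp_id]) (rule comp_pred[OF comp_snd[OF comp_snd0]])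
  moreover have "prr (\<lambda>y. y) (\<lambda>q. snd (prod_decode (snd (prod_decode q))) - 1) y n = y - n" for y n
    by (induction n) auto
  ultimately have "comp C (\<lambda>p. fst (prod_decode p) - snd (prod_decode p))" by simp
  thus "comp C f \<Longrightarrow> comp C g \<Longrightarrow> comp C (\<lambda>x. f x - g x)" by (rule comp_bin)
qed

lemma comp_mult: "comp C f \<Longrightarrow> comp C g \<Longrightarrow> comp C (\<lambda>x. f x * g x)"
proof -
  have "comp C (\<lambda>x. prr (\<lambda>_. 0) (\<lambda>q. snd (prod_decode (snd (prod_decode q))) + fst (prod_decode q)) (fst (prod_decode x)) (snd (prod_decode x)))"
    by (rule comp_prr[OF comp_const]) (rule comp_add[OF comp_snd[OF comp_snd0] comp_fst0])
  moreover have "prr (\<lambda>_. 0) (\<lambda>q. snd (prod_decode (snd (prod_decode q))) + fst (prod_decode q)) y n = y * n" for y n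
    by (induction n) auto
  ultimately have "comp C (\<lambda>p. fst (prod_decode p) * snd (prod_decode p))" by simp
  thus "comp C f \<Longrightarrow> comp C g \<Longrightarrow> comp C (\<lambda>x. f x * g x)" by (rule comp_bin)
qed

lemma comp_pow2: "comp C f \<Longrightarrow> comp C (\<lambda>x. 2 ^ f x)"
proof -
  have "comp C (\<lambda>x. prr (\<lambda>_. 1) (\<lambda>q. snd (prod_decode (snd (prod_decode q))) + snd (prod_decode (snd (prod_decode q)))) (fst (prod_decode x)) (snd (prod_decode x)))"
    by (rule comp_prr[OF comp_const]) (rule comp_add[OF comp_snd[OF comp_snd0] comp_snd[OF comp_snd0]])
  moreover have "prr (\<lambda>_. 1) (\<lambda>q. snd (prod_decode (snd (prod_decode q))) + snd (prod_decode (snd (prod_decode q)))) y n = 2 ^ n" for y n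
    by (induction n) auto
  ultimately have "comp C (\<lambda>x. 2 ^ snd (prod_decode x))" by simp
  from comp_compose[OF this comp_pair[OF comp_const]]
  show "comp C f \<Longrightarrow> comp C (\<lambda>x. 2 ^ f x)" by simp
qed

lemma comp_mu: "comp C (\<lambda>p. H (fst (prod_decode p)) (snd (prod_decode p))) \<Longrightarrow> (\<forall>x. \<exists>n. H x n = 0) \<Longrightarrow>
   comp C (\<lambda>x. LEAST n. H x n = 0)"
  using comp_mu0[of C "\<lambda>p. H (fst (prod_decode p)) (snd (prod_decode p))"] by simp

lemma least_div: "0 < (b::nat) \<Longrightarrow> (LEAST q. b * (1 - (Suc q * b - a)) = 0) = a div b"
proof (rule Least_equality)
  assume b: "0 < b"
  have "a < Suc (a div b) * b" using b
    by (metis div_less_iff_less_mult lessI mult.commute)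
  thus "b * (1 - (Suc (a div b) * b - a)) = 0" by simp
  fix y assume "b * (1 - (Suc y * b - a)) = 0"
  with b have "a < Suc y * b" by simp
  thus "a div b \<le> y" using b
    by (metis less_Suc_eq_le less_mult_imp_div_less)
qed

lemma least_div_zero: "0 < (b::nat) \<Longrightarrow> b * (1 - (Suc (a div b) * b - a)) = 0"
proof -
  assume b: "0 < b"
  have "a < Suc (a div b) * b" using b
    by (metis div_less_iff_less_mult lessI mult.commute)
  thus ?thesis by simp
qed

lemma comp_div: "comp C f \<Longrightarrow> comp C g \<Longrightarrow> comp C (\<lambda>x. f x div g x)"
proof -
  let ?H = "\<lambda>x q. snd (prod_decode x) * (1 - (Suc q * snd (prod_decode x) - fst (prod_decode x)))"
  have c: "comp C (\<lambda>p. ?H (fst (prod_decode p)) (snd (prod_decode p)))"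
    apply (rule comp_mult)
     apply (rule comp_snd[OF comp_fst0])
    apply (rule comp_sub[OF comp_const])
    apply (rule comp_sub)
     apply (rule comp_mult)
      apply (rule comp_Suc1[OF comp_snd0])
     apply (rule comp_snd[OF comp_fst0])
    apply (rule comp_fst[OF comp_fst0])
    done
  have "\<forall>x. \<exists>n. ?H x n = 0"
  proof
    fix x
    show "\<exists>n. ?H x n = 0"
    proof (cases "snd (prod_decode x) = 0")
      case True thus ?thesis by auto
    next
      case False
      thus ?thesis using least_div_zero[of "snd (prod_decode x)" "fst (prod_decode x)"] by blast
    qed
  qed
  from comp_mu[OF c this]
  have "comp C (\<lambda>x. LEAST q. ?H x q = 0)" .
  moreover have "(LEAST q. ?H x q = 0) = fst (prod_decode x) div snd (prod_decode x)" for x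
  proof (cases "snd (prod_decode x) = 0")
    case True thus ?thesis by (auto intro!: Least_equality)
  next
    case False thus ?thesis using least_div[of "snd (prod_decode x)" "fst (prod_decode x)"] by simp
  qed
  ultimately have "comp C (\<lambda>x. fst (prod_decode x) div snd (prod_decode x))" by simp
  thus "comp C f \<Longrightarrow> comp C g \<Longrightarrow> comp C (\<lambda>x. f x div g x)" by (rule comp_bin)
qed

lemma comp_mod: "comp C f \<Longrightarrow> comp C g \<Longrightarrow> comp C (\<lambda>x. f x mod g x)"
proof -
  assume a: "comp C f" "comp C g"
  have "comp C (\<lambda>x. f x - g x * (f x div g x))"
    by (intro comp_sub comp_mult comp_div a)
  moreover have "f x - g x * (f x div g x) = f x mod g x" for x
    by (simp add: minus_mult_div_eq_mod)
  ultimately show ?thesis by simp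
qed

lemma comp_sum: "comp C (\<lambda>p. H (fst (prod_decode p)) (snd (prod_decode p))) \<Longrightarrow> comp C f \<Longrightarrow>
   comp C (\<lambda>x. \<Sum>i<f x. H x i)"
proof -
  assume h: "comp C (\<lambda>p. H (fst (prod_decode p)) (snd (prod_decode p)))" and f: "comp C f"
  let ?g = "\<lambda>q. snd (prod_decode (snd (prod_decode q))) + H (fst (prod_decode q)) (fst (prod_decode (snd (prod_decode q))))"
  have cg: "comp C ?g"
    apply (rule comp_add[OF comp_snd[OF comp_snd0]])
    using comp_compose[OF h comp_pair[OF comp_fst0 comp_fst[OF comp_snd0]]] by simp
  have "comp C (\<lambda>x. prr (\<lambda>_. 0) ?g (fst (prod_decode x)) (snd (prod_decode x)))"
    by (rule comp_prr[OF comp_const cg])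
  moreover have "prr (\<lambda>_. 0) ?g y n = (\<Sum>i<n. H y i)" for y n
    by (induction n) auto
  ultimately have "comp C (\<lambda>p. \<Sum>i<snd (prod_decode p). H (fst (prod_decode p)) i)" by simp
  from comp_bin[OF this comp_id f] show ?thesis by simp
qed

lemma comp_chi: "comp C (chi T) \<Longrightarrow> comp C f \<Longrightarrow> comp C (\<lambda>x. chi T (f x))"
  by (rule comp_compose)

lemma comp_if: "comp C f \<Longrightarrow> comp C g \<Longrightarrow> comp C (\<lambda>x. if b then f x else g x)"
  by (cases b) auto

lemmas comp_rules = comp_const comp_id comp_Suc1 comp_fst comp_snd comp_pe comp_add comp_sub comp_mult comp_pow2
  comp_div comp_mod comp_sum comp_if



definition bits :: "nat \<Rightarrow> nat \<Rightarrow> bool list" where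
  "bits s L = map (\<lambda>p. p \<in> set_decode s) [0..<L]"

lemma length_bits[simp]: "length (bits s L) = L"
  by (simp add: bits_def)

lemma take_bits: "j \<le> L \<Longrightarrow> take j (bits s L) = bits s j"
  by (simp add: bits_def take_map)

lemma nth_bits: "p < L \<Longrightarrow> bits s L ! p = (p \<in> set_decode s)"
  by (simp add: bits_def)

lemma mem_set_decode: "(p \<in> set_decode s) = (s div 2 ^ p mod 2 = 1)"
  by (simp add: set_decode_def odd_iff_mod_2_eq_one)

lemma strcode_snoc: "strcode (w @ [b]) = strcode w + (if b then 2 else 1) * 2 ^ length w"
  by (induction w) auto

definition enc :: "nat \<Rightarrow> nat \<Rightarrow> nat" where
  "enc s j = (\<Sum>p<j. (1 + s div 2 ^ p mod 2) * 2 ^ p)"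

lemma bits_Suc: "bits s (Suc j) = bits s j @ [j \<in> set_decode s]"
  by (simp add: bits_def)

lemma strcode_bits: "strcode (bits s j) = enc s j"
proof (induction j)
  case 0 thus ?case by (simp add: bits_def enc_def)
next
  case (Suc j)
  have m: "s div 2 ^ j mod 2 = 0 \<or> s div 2 ^ j mod 2 = 1" by auto
  show ?case using Suc m unfolding bits_Suc strcode_snoc enc_def
    by (auto simp: mem_set_decode)
qed

lemma take_init_seg: "j \<le> l \<Longrightarrow> take j (init_seg X l) = init_seg X j"
  by (simp add: init_seg_def take_map)

lemma length_init_seg[simp]: "length (init_seg X l) = l"
  by (simp add: init_seg_def)

lemma nth_init_seg: "p < l \<Longrightarrow> init_seg X l ! p = (p \<in> X)"
  by (simp add: init_seg_def)

lemma finite_str_set[simp]: "finite (str_set w)"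
  by (simp add: str_set_def)

lemma bits_str_set: "bits (set_encode (str_set w)) (length w) = w"
  by (rule nth_equalityI) (auto simp: nth_bits str_set_def)

lemma set_encode_lt: "finite F \<Longrightarrow> F \<subseteq> {..<L} \<Longrightarrow> set_encode F < 2 ^ L"
proof -
  assume f: "finite F" and s: "F \<subseteq> {..<L}"
  have "set_encode F \<le> set_encode {..<L}"
    using f s by (intro subset_decode_imp_le) simp
  also have "set_encode {..<L} = 2 ^ L - 1"
    by (induction L) (simp_all add: lessThan_Suc set_encode_def)
  finally have "set_encode F \<le> 2 ^ L - 1" .
  moreover have "(0::nat) < 2 ^ L" by simp
  ultimately show ?thesis by linarith
qed

lemma exists_bits: "length w = L \<Longrightarrow> \<exists>s<2^L. bits s L = w"
  using bits_str_set[of w] set_encode_lt[of "str_set w" L]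
  by (auto simp: str_set_def)

lemma koenig:
  assumes pc: "\<And>w j. P w \<Longrightarrow> j \<le> length w \<Longrightarrow> P (take j w)"
    and live: "\<And>l. \<exists>w. length w = l \<and> P w"
  shows "\<exists>X. \<forall>l. P (init_seg X l)"
proof -
  define ext where "ext w \<longleftrightarrow> (\<forall>l\<ge>length w. \<exists>v. length v = l \<and> P v \<and> take (length w) v = w)" for w
  have ext_step: "ext (w @ [True]) \<or> ext (w @ [False])" if e: "ext w" for w
  proof (rule ccontr)
    assume "\<not> (ext (w @ [True]) \<or> ext (w @ [False]))"
    then obtain l1 l2 where l1: "l1 \<ge> Suc (length w)" "\<forall>v. length v = l1 \<and> P v \<longrightarrow> take (Suc (length w)) v \<noteq> w @ [True]"
      and l2: "l2 \<ge> Suc (length w)" "\<forall>v. length v = l2 \<and> P v \<longrightarrow> take (Suc (length w)) v \<noteq> w @ [False]"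
      unfolding ext_def by auto
    define l where "l = max l1 l2"
    have ll: "length w < l" using l1(1) by (simp add: l_def)
    obtain v where v: "length v = l" "P v" "take (length w) v = w"
      using e ll unfolding ext_def by (meson less_imp_le)
    have tw: "take (Suc (length w)) v = w @ [v ! length w]"
      using v ll by (simp add: take_Suc_conv_app_nth)
    show False
    proof (cases "v ! length w")
      case True
      have "P (take l1 v)" using pc[OF v(2)] v(1) unfolding l_def by simp
      moreover have "take (Suc (length w)) (take l1 v) = w @ [True]" using tw True l1(1) by (simp add: min_def)
      moreover have "length (take l1 v) = l1" using v(1) by (simp add: l_def)
      ultimately show False using l1(2) by blast
    next
      case False
      have "P (take l2 v)" using pc[OF v(2)] v(1) unfolding l_def by simp
      moreover have "take (Suc (length w)) (take l2 v) = w @ [False]" using tw False l2(1) by (simp add: min_def)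
      moreover have "length (take l2 v) = l2" using v(1) by (simp add: l_def)
      ultimately show False using l2(2) by blast
    qed
  qed
  define W where "W = rec_nat [] (\<lambda>n w. if ext (w @ [True]) then w @ [True] else w @ [False])"
  have W0: "W 0 = []" and WS: "W (Suc n) = (if ext (W n @ [True]) then W n @ [True] else W n @ [False])" for n
    by (simp_all add: W_def)
  have Wext: "ext (W n) \<and> length (W n) = n" for n
  proof (induction n)
    case 0
    show ?case using live unfolding W0 ext_def by auto
  next
    case (Suc n)
    thus ?case using ext_step[of "W n"] unfolding WS by auto
  qed
  define X where "X = {n. W (Suc n) ! n}"
  have "init_seg X n = W n" for n
  proof (induction n)
    case 0 thus ?case by (simp add: init_seg_def W0)
  next
    case (Suc n)
    have "W (Suc n) = W n @ [W (Suc n) ! n]" using Wext[of n] unfolding WS by (simp add: nth_append)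
    thus ?case using Suc by (simp add: init_seg_def X_def)
  qed
  moreover have "P (W n)" for n
    using Wext[of n] unfolding ext_def by force
  ultimately show ?thesis by metis
qed



definition viol :: "nat \<Rightarrow> nat set \<Rightarrow> nat set \<Rightarrow> nat \<Rightarrow> nat set \<Rightarrow> bool" where
  "viol k A I N Y \<longleftrightarrow> (\<exists>n>N. (\<exists>i<k. i\<in>I \<and> k*n+i \<in> Y \<and> n\<notin>A) \<or> (\<exists>i<k. i\<notin>I \<and> k*n+i\<in>Y \<and> n\<in>A))"

definition Pb :: "nat set \<Rightarrow> bool list \<Rightarrow> nat \<Rightarrow> nat set \<Rightarrow> bool \<Rightarrow> nat \<Rightarrow> bool list \<Rightarrow> bool" where
  "Pb T \<sigma> k I b n w \<longleftrightarrow> (\<forall>j\<le>length w. strcode (take j w) \<in> T) \<and>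
     (length \<sigma> \<le> length w \<longrightarrow> take (length \<sigma>) w = \<sigma>) \<and>
     (k*n+k \<le> length w \<longrightarrow> (\<exists>i<k. (i\<in>I) = b \<and> w!(k*n+i)))"

lemma Pb_take: "Pb T \<sigma> k I b n w \<Longrightarrow> j \<le> length w \<Longrightarrow> Pb T \<sigma> k I b n (take j w)"
  unfolding Pb_def
proof (intro conjI allI impI)
  assume a: "(\<forall>j\<le>length w. strcode (take j w) \<in> T) \<and>
     (length \<sigma> \<le> length w \<longrightarrow> take (length \<sigma>) w = \<sigma>) \<and>
     (k*n+k \<le> length w \<longrightarrow> (\<exists>i<k. (i\<in>I) = b \<and> w!(k*n+i)))" and j: "j \<le> length w"
  fix j' assume "j' \<le> length (take j w)"
  thus "strcode (take j' (take j w)) \<in> T" using a j by (simp add: min_def)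
next
  assume a: "(\<forall>j\<le>length w. strcode (take j w) \<in> T) \<and>
     (length \<sigma> \<le> length w \<longrightarrow> take (length \<sigma>) w = \<sigma>) \<and>
     (k*n+k \<le> length w \<longrightarrow> (\<exists>i<k. (i\<in>I) = b \<and> w!(k*n+i)))" and j: "j \<le> length w"
  assume "length \<sigma> \<le> length (take j w)"
  hence "length \<sigma> \<le> j" "length \<sigma> \<le> length w" using j by auto
  hence "take (length \<sigma>) (take j w) = take (length \<sigma>) w" by (simp add: min_absorb1)
  thus "take (length \<sigma>) (take j w) = \<sigma>" using a \<open>length \<sigma> \<le> length w\<close> by simp
next
  assume a: "(\<forall>j\<le>length w. strcode (take j w) \<in> T) \<and>
     (length \<sigma> \<le> length w \<longrightarrow> take (length \<sigma>) w = \<sigma>) \<and>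
     (k*n+k \<le> length w \<longrightarrow> (\<exists>i<k. (i\<in>I) = b \<and> w!(k*n+i)))" and j: "j \<le> length w"
  assume l: "k*n+k \<le> length (take j w)"
  then obtain i where "i<k" "(i\<in>I) = b" "w!(k*n+i)" using a j by auto
  moreover have "k*n+i < j" using l \<open>i<k\<close> by simp
  ultimately show "\<exists>i<k. (i\<in>I) = b \<and> take j w!(k*n+i)" by auto
qed

lemma Pb_init: "(\<forall>l. Pb T \<sigma> k I b n (init_seg X l)) \<longleftrightarrow>
   (\<forall>l. strcode (init_seg X l) \<in> T) \<and> init_seg X (length \<sigma>) = \<sigma> \<and> (\<exists>i<k. (i\<in>I) = b \<and> k*n+i \<in> X)"
proof
  assume a: "\<forall>l. Pb T \<sigma> k I b n (init_seg X l)"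
  have "strcode (init_seg X l) \<in> T" for l using a[rule_format, of l] unfolding Pb_def by auto
  moreover have "init_seg X (length \<sigma>) = \<sigma>" using a[rule_format, of "length \<sigma>"] unfolding Pb_def by auto
  moreover have "\<exists>i<k. (i\<in>I) = b \<and> k*n+i \<in> X"
  proof -
    obtain i where "i<k" "(i\<in>I) = b" "init_seg X (k*n+k) ! (k*n+i)"
      using a[rule_format, of "k*n+k"] unfolding Pb_def by auto
    thus ?thesis by (auto simp: nth_init_seg)
  qed
  ultimately show "(\<forall>l. strcode (init_seg X l) \<in> T) \<and> init_seg X (length \<sigma>) = \<sigma> \<and> (\<exists>i<k. (i\<in>I) = b \<and> k*n+i \<in> X)"
    by blast
next
  assume a: "(\<forall>l. strcode (init_seg X l) \<in> T) \<and> init_seg X (length \<sigma>) = \<sigma> \<and> (\<exists>i<k. (i\<in>I) = b \<and> k*n+i \<in> X)"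
  show "\<forall>l. Pb T \<sigma> k I b n (init_seg X l)"
  proof
    fix l
    show "Pb T \<sigma> k I b n (init_seg X l)" unfolding Pb_def
    proof (intro conjI allI impI)
      fix j assume "j \<le> length (init_seg X l)"
      thus "strcode (take j (init_seg X l)) \<in> T" using a by (simp add: take_init_seg)
    next
      assume "length \<sigma> \<le> length (init_seg X l)"
      thus "take (length \<sigma>) (init_seg X l) = \<sigma>" using a by (simp add: take_init_seg)
    next
      assume l: "k*n+k \<le> length (init_seg X l)"
      obtain i where "i<k" "(i\<in>I) = b" "k*n+i \<in> X" using a by auto
      moreover have "k*n+i < l" using l \<open>i<k\<close> by simp
      ultimately show "\<exists>i<k. (i\<in>I) = b \<and> init_seg X l!(k*n+i)" by (auto simp: nth_init_seg)
    qed
  qed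
qed

definition Lnum :: "nat set \<Rightarrow> bool list \<Rightarrow> nat \<Rightarrow> nat set \<Rightarrow> bool \<Rightarrow> nat \<Rightarrow> nat \<Rightarrow> nat \<Rightarrow> nat" where
  "Lnum T \<sigma> k I b n L s =
     (1 - (\<Sum>j<Suc L. 1 - chi T (enc s j))) *
     (1 - (\<Sum>p<length \<sigma>. (s div 2^p mod 2 + set_encode (str_set \<sigma>) div 2^p mod 2) mod 2)) *
     (1 - (1 - (\<Sum>i<k. (if b then set_encode (I \<inter> {..<k}) div 2^i mod 2 else 1 - set_encode (I \<inter> {..<k}) div 2^i mod 2)
                 * (s div 2^(k*n+i) mod 2))))"

lemma mod2_cases: "(x::nat) mod 2 = 0 \<or> x mod 2 = 1" by auto

lemma bit_str_set: "p < length \<sigma> \<Longrightarrow> (set_encode (str_set \<sigma>) div 2^p mod 2 = 1) = \<sigma> ! p"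
  using mem_set_decode[of p "set_encode (str_set \<sigma>)"] by (simp add: str_set_def)

lemma bit_I: "i < k \<Longrightarrow> (set_encode (I \<inter> {..<k}) div 2^i mod 2 = 1) = (i \<in> I)"
  using mem_set_decode[of i "set_encode (I \<inter> {..<k})"] by simp

lemma aux0: "((x::nat) = 0 \<longleftrightarrow> Q) \<Longrightarrow> 1 - x = (if Q then 1 else 0)" by auto
lemma aux1: "((x::nat) \<noteq> 0 \<longleftrightarrow> Q) \<Longrightarrow> 1 - (1 - x) = (if Q then 1 else 0)" by auto

lemma sum_ne0: "(\<Sum>i<(k::nat). (f i::nat)) \<noteq> 0 \<longleftrightarrow> (\<exists>i<k. f i \<noteq> 0)" by (subst sum_eq_0_iff) auto

lemma F1: "(1 - (\<Sum>j<Suc L. 1 - chi T (enc s j))) = (if (\<forall>j\<le>L. strcode (take j (bits s L)) \<in> T) then 1 else 0)"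
proof -
  have "(\<forall>j\<le>L. strcode (take j (bits s L)) \<in> T) \<longleftrightarrow> (\<forall>j<Suc L. 1 - chi T (enc s j) = 0)"
    by (auto simp: take_bits strcode_bits chi_def less_Suc_eq_le)
  also have "\<dots> \<longleftrightarrow> (\<Sum>j<Suc L. 1 - chi T (enc s j)) = 0" by (subst sum_eq_0_iff) auto
  finally show ?thesis by (intro aux0) simp
qed

lemma F2: "length \<sigma> \<le> L \<Longrightarrow> (1 - (\<Sum>p<length \<sigma>. (s div 2^p mod 2 + set_encode (str_set \<sigma>) div 2^p mod 2) mod 2))
   = (if take (length \<sigma>) (bits s L) = \<sigma> then 1 else 0)"
proof -
  assume L: "length \<sigma> \<le> L"
  have e: "((s div 2^p mod 2 + set_encode (str_set \<sigma>) div 2^p mod 2) mod 2 = 0) = (bits s L ! p = \<sigma> ! p)"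
    if p: "p < length \<sigma>" for p
  proof -
    have "bits s L ! p = (s div 2^p mod 2 = 1)" using p L by (simp add: nth_bits mem_set_decode)
    moreover note bit_str_set[OF p, symmetric]
    moreover note mod2_cases[of "s div 2^p"] mod2_cases[of "set_encode (str_set \<sigma>) div 2^p"]
    ultimately show ?thesis by auto
  qed
  have "take (length \<sigma>) (bits s L) = \<sigma> \<longleftrightarrow> (\<forall>p<length \<sigma>. bits s L ! p = \<sigma> ! p)"
    using L by (auto simp: list_eq_iff_nth_eq)
  also have "\<dots> \<longleftrightarrow> (\<forall>p<length \<sigma>. (s div 2^p mod 2 + set_encode (str_set \<sigma>) div 2^p mod 2) mod 2 = 0)"
    using e by auto
  also have "\<dots> \<longleftrightarrow> (\<Sum>p<length \<sigma>. (s div 2^p mod 2 + set_encode (str_set \<sigma>) div 2^p mod 2) mod 2) = 0" by (subst sum_eq_0_iff) auto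
  finally show ?thesis by (intro aux0) simp
qed

lemma F3: "k*n+k \<le> L \<Longrightarrow> (1 - (1 - (\<Sum>i<k. (if b then set_encode (I \<inter> {..<k}) div 2^i mod 2 else 1 - set_encode (I \<inter> {..<k}) div 2^i mod 2)
                 * (s div 2^(k*n+i) mod 2))))
   = (if (\<exists>i<k. (i\<in>I) = b \<and> bits s L!(k*n+i)) then 1 else 0)"
proof -
  assume L: "k*n+k \<le> L"
  let ?f = "\<lambda>i. (if b then set_encode (I \<inter> {..<k}) div 2^i mod 2 else 1 - set_encode (I \<inter> {..<k}) div 2^i mod 2)
                 * (s div 2^(k*n+i) mod 2)"
  have e: "(?f i \<noteq> 0) = ((i\<in>I) = b \<and> bits s L!(k*n+i))" if i: "i<k" for i
  proof -
    have "bits s L!(k*n+i) = (s div 2^(k*n+i) mod 2 = 1)" using i L by (simp add: nth_bits mem_set_decode)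
    moreover note bit_I[OF i, of I]
    moreover note mod2_cases[of "s div 2^(k*n+i)"] mod2_cases[of "set_encode (I \<inter> {..<k}) div 2^i"]
    ultimately show ?thesis by (cases b) auto
  qed
  have "(\<Sum>i<k. ?f i) \<noteq> 0 \<longleftrightarrow> (\<exists>i<k. ?f i \<noteq> 0)" by (rule sum_ne0)
  also have "\<dots> \<longleftrightarrow> (\<exists>i<k. (i\<in>I) = b \<and> bits s L!(k*n+i))" using e by blast
  finally have c: "(\<Sum>i<k. ?f i) \<noteq> 0 \<longleftrightarrow> (\<exists>i<k. (i\<in>I) = b \<and> bits s L!(k*n+i))" .
  show ?thesis by (rule aux1[OF c])
qed

lemma Lnum_eq: "length \<sigma> + k*n + k \<le> L \<Longrightarrow> Lnum T \<sigma> k I b n L s = (if Pb T \<sigma> k I b n (bits s L) then 1 else 0)"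
proof -
  assume L: "length \<sigma> + k*n + k \<le> L"
  hence L1: "length \<sigma> \<le> L" and L2: "k*n+k \<le> L" by auto
  show ?thesis unfolding Lnum_def F1 F2[OF L1] F3[OF L2] Pb_def using L1 L2 by simp
qed



context
  fixes C A T :: "nat set" and \<sigma> :: "bool list" and k N :: nat and I Yz :: "nat set"
  assumes k: "0 < k"
    and cT: "comp C (chi T)"
    and cov: "\<And>X n. (\<forall>l. strcode (init_seg X l) \<in> T) \<Longrightarrow> \<exists>i<k. k*n+i \<in> X"
    and Y0T: "\<forall>l. strcode (init_seg Yz l) \<in> T"
    and Y0s: "init_seg Yz (length \<sigma>) = \<sigma>"
    and nv: "\<And>Y. (\<forall>l. strcode (init_seg Y l) \<in> T) \<Longrightarrow> init_seg Y (length \<sigma>) = \<sigma> \<Longrightarrow> \<not> viol k A I N Y"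
begin

definition "M0 n = length \<sigma> + k*n + k"
definition "Ssum b n l = (\<Sum>s<2^(l + M0 n). Lnum T \<sigma> k I b n (l + M0 n) s)"

lemma S_zero: "Ssum b n l = 0 \<longleftrightarrow> \<not> (\<exists>w. length w = l + M0 n \<and> Pb T \<sigma> k I b n w)"
proof
  assume z: "Ssum b n l = 0"
  show "\<not> (\<exists>w. length w = l + M0 n \<and> Pb T \<sigma> k I b n w)"
  proof
    assume "\<exists>w. length w = l + M0 n \<and> Pb T \<sigma> k I b n w"
    then obtain w where w: "length w = l + M0 n" "Pb T \<sigma> k I b n w" by auto
    obtain s where s: "s < 2^(l + M0 n)" "bits s (l + M0 n) = w" using exists_bits[OF w(1)] by auto
    have "Lnum T \<sigma> k I b n (l + M0 n) s = 1"
      using Lnum_eq[of \<sigma> k n "l + M0 n" T I b s] s w by (simp add: M0_def)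
    moreover have "Lnum T \<sigma> k I b n (l + M0 n) s = 0" using z s unfolding Ssum_def by simp
    ultimately show False by simp
  qed
next
  assume n: "\<not> (\<exists>w. length w = l + M0 n \<and> Pb T \<sigma> k I b n w)"
  have "Lnum T \<sigma> k I b n (l + M0 n) s = 0" for s
    using Lnum_eq[of \<sigma> k n "l + M0 n" T I b s] n by (simp add: M0_def)
  thus "Ssum b n l = 0" unfolding Ssum_def by simp
qed

lemma good: "N < n \<Longrightarrow> Pb T \<sigma> k I (n \<in> A) n (init_seg Yz l)"
proof -
  assume n: "N < n"
  obtain i where i: "i<k" "k*n+i \<in> Yz" using cov[OF Y0T] by auto
  have "(i \<in> I) = (n \<in> A)" using nv[OF Y0T Y0s] i n unfolding viol_def by blast
  hence "\<forall>l. Pb T \<sigma> k I (n \<in> A) n (init_seg Yz l)"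
    unfolding Pb_init using Y0T Y0s i by blast
  thus ?thesis by blast
qed

lemma bad: "N < n \<Longrightarrow> \<exists>l. \<not> (\<exists>w. length w = l \<and> Pb T \<sigma> k I (n \<notin> A) n w)"
proof (rule ccontr)
  assume n: "N < n" and c: "\<nexists>l. \<not> (\<exists>w. length w = l \<and> Pb T \<sigma> k I (n \<notin> A) n w)"
  obtain X where X: "\<forall>l. Pb T \<sigma> k I (n \<notin> A) n (init_seg X l)"
    using koenig[of "Pb T \<sigma> k I (n \<notin> A) n"] Pb_take c by blast
  hence X': "(\<forall>l. strcode (init_seg X l) \<in> T)" "init_seg X (length \<sigma>) = \<sigma>" "\<exists>i<k. (i\<in>I) = (n \<notin> A) \<and> k*n+i \<in> X"
    unfolding Pb_init by auto
  have "viol k A I N X" using X'(3) n unfolding viol_def by blast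
  thus False using nv[OF X'(1,2)] by simp
qed

lemma S_good: "N < n \<Longrightarrow> Ssum (n \<in> A) n l \<noteq> 0"
proof -
  assume n: "N < n"
  have "length (init_seg Yz (l + M0 n)) = l + M0 n" by simp
  thus ?thesis unfolding S_zero using good[OF n, of "l + M0 n"] by blast
qed

lemma S_bad: "N < n \<Longrightarrow> \<exists>l. Ssum (n \<notin> A) n l = 0"
proof -
  assume n: "N < n"
  obtain l where l: "\<not> (\<exists>w. length w = l \<and> Pb T \<sigma> k I (n \<notin> A) n w)" using bad[OF n] by auto
  have "\<not> (\<exists>w. length w = l + M0 n \<and> Pb T \<sigma> k I (n \<notin> A) n w)"
  proof
    assume "\<exists>w. length w = l + M0 n \<and> Pb T \<sigma> k I (n \<notin> A) n w"
    then obtain w where "length w = l + M0 n" "Pb T \<sigma> k I (n \<notin> A) n w" by auto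
    hence "length (take l w) = l" "Pb T \<sigma> k I (n \<notin> A) n (take l w)" using Pb_take by auto
    thus False using l by blast
  qed
  thus ?thesis unfolding S_zero by blast
qed

definition "Hf n l = (n - N) * (Ssum True n l * Ssum False n l)"

lemma H_ex: "\<exists>l. Hf n l = 0"
proof (cases "N < n")
  case False thus ?thesis by (simp add: Hf_def)
next
  case True
  obtain l where "Ssum (n \<notin> A) n l = 0" using S_bad[OF True] by auto
  thus ?thesis unfolding Hf_def by (cases "n \<in> A") auto
qed

definition "algf n = (LEAST l. Hf n l = 0)"

definition "resf n = (1 - (n - N)) * (set_encode (A \<inter> {..N}) div 2^n mod 2) + (1 - (1 - (n - N))) * (1 - Ssum False n (algf n))"

lemma res_eq: "resf n = chi A n"
proof (cases "N < n")
  case False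
  have "(set_encode (A \<inter> {..N}) div 2^n mod 2 = 1) = (n \<in> A)"
    using mem_set_decode[of n "set_encode (A \<inter> {..N})"] False by simp
  moreover note mod2_cases[of "set_encode (A \<inter> {..N}) div 2^n"]
  ultimately show ?thesis using False by (auto simp: resf_def chi_def)
next
  case True
  have "Hf n (algf n) = 0" unfolding algf_def using H_ex by (rule LeastI_ex)
  hence z: "Ssum True n (algf n) * Ssum False n (algf n) = 0" using True by (simp add: Hf_def)
  show ?thesis
  proof (cases "n \<in> A")
    case a: True
    have "Ssum True n (algf n) \<noteq> 0" using S_good[OF True, of "algf n"] a by simp
    hence "Ssum False n (algf n) = 0" using z by simp
    thus ?thesis using True a by (simp add: resf_def chi_def)
  next
    case a: False
    have "Ssum False n (algf n) \<noteq> 0" using S_good[OF True, of "algf n"] a by simp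
    thus ?thesis using True a by (simp add: resf_def chi_def)
  qed
qed

lemma comp_S: "comp C (\<lambda>p. Ssum b (fst (prod_decode p)) (snd (prod_decode p)))"
  unfolding Ssum_def Lnum_def M0_def enc_def
  by (intro comp_rules comp_chi[OF cT])

lemma comp_alg: "comp C algf"
  unfolding algf_def Hf_def
  by (rule comp_mu[OF _ ]) (intro comp_rules comp_S, use H_ex in \<open>simp add: Hf_def\<close>)

lemma key_turing: "turing_le A C"
proof -
  have "comp C resf"
    unfolding resf_def
    by (intro comp_rules comp_bin[OF comp_S comp_id comp_alg])
  moreover have "resf = chi A" using res_eq by auto
  ultimately show ?thesis unfolding turing_le_def by simp
qed

end



definition vat :: "nat \<Rightarrow> nat set \<Rightarrow> nat set \<Rightarrow> nat \<Rightarrow> nat set \<Rightarrow> bool" where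
  "vat k A I n Y \<longleftrightarrow> (\<exists>i<k. i\<in>I \<and> k*n+i \<in> Y \<and> n\<notin>A) \<or> (\<exists>i<k. i\<notin>I \<and> k*n+i\<in>Y \<and> n\<in>A)"

lemma viol_vat: "viol k A I N Y \<longleftrightarrow> (\<exists>n>N. vat k A I n Y)"
  unfolding viol_def vat_def by blast

lemma vat_init: "init_seg Z L = init_seg Y L \<Longrightarrow> k*n+k < L \<Longrightarrow> vat k A I n Z = vat k A I n Y"
proof -
  assume e: "init_seg Z L = init_seg Y L" and L: "k*n+k < L"
  have "i < k \<Longrightarrow> (k*n+i \<in> Z) = (k*n+i \<in> Y)" for i
    using arg_cong[OF e, of "\<lambda>w. w ! (k*n+i)"] L by (simp add: nth_init_seg)
  thus ?thesis unfolding vat_def by blast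
qed

lemma prefix_init: "init_seg Y L = \<sigma> \<Longrightarrow> L' \<ge> L \<Longrightarrow> take L (init_seg Y L') = \<sigma>"
  by (simp add: take_init_seg)

context
  fixes C A T :: "nat set" and k :: nat and P :: "nat set set"
  assumes k: "0 < k"
    and cT: "comp C (chi T)"
    and PT: "P = {X. \<forall>l. strcode (init_seg X l) \<in> T}"
    and cov: "\<And>X n. X \<in> P \<Longrightarrow> \<exists>i<k. k*n+i \<in> X"
    and noacc: "\<And>X i. X \<in> P \<Longrightarrow> i < k \<Longrightarrow> finite (part k X i \<inter> A) \<or> finite (part k X i - A)"
    and nT: "\<not> turing_le A C"
begin

lemma step: "Y0 \<in> P \<Longrightarrow> \<exists>Y n. Y \<in> P \<and> init_seg Y (length \<sigma>) = init_seg Y0 (length \<sigma>) \<and> N < n \<and> vat k A I n Y"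
proof (rule ccontr)
  assume Y0: "Y0 \<in> P" and c: "\<not> (\<exists>Y n. Y \<in> P \<and> init_seg Y (length \<sigma>) = init_seg Y0 (length \<sigma>) \<and> N < n \<and> vat k A I n Y)"
  let ?s = "init_seg Y0 (length \<sigma>)"
  have "turing_le A C"
  proof (rule key_turing[where k=k and C=C and T=T and \<sigma>="?s" and Yz=Y0 and A=A and I=I and N=N])
    show "0 < k" by (rule k)
    show "comp C (chi T)" by (rule cT)
    show "\<And>X n. \<forall>l. strcode (init_seg X l) \<in> T \<Longrightarrow> \<exists>i<k. k * n + i \<in> X" using cov PT by auto
    show "\<forall>l. strcode (init_seg Y0 l) \<in> T" using Y0 PT by auto
    show "init_seg Y0 (length ?s) = ?s" by simp
    show "\<And>Y. \<forall>l. strcode (init_seg Y l) \<in> T \<Longrightarrow> init_seg Y (length ?s) = ?s \<Longrightarrow> \<not> viol k A I N Y"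
      using c PT unfolding viol_vat by auto
  qed
  thus False using nT by simp
qed

definition nxt :: "bool list \<Rightarrow> nat \<Rightarrow> bool list" where
  "nxt \<sigma> s = (let I = set_decode (fst (prod_decode s)); N = snd (prod_decode s);
      Yn = (SOME Yn. fst Yn \<in> P \<and> init_seg (fst Yn) (length \<sigma>) = \<sigma> \<and> N < snd Yn \<and> vat k A I (snd Yn) (fst Yn))
    in init_seg (fst Yn) (Suc (length \<sigma> + k * snd Yn + k)))"

definition "inv_s \<sigma> \<longleftrightarrow> (\<exists>Y\<in>P. init_seg Y (length \<sigma>) = \<sigma>)"

lemma nxt_props:
  assumes "inv_s \<sigma>"
  shows "inv_s (nxt \<sigma> s) \<and> take (length \<sigma>) (nxt \<sigma> s) = \<sigma> \<and> length \<sigma> < length (nxt \<sigma> s) \<and>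
    (\<exists>n > snd (prod_decode s). \<forall>Z. init_seg Z (length (nxt \<sigma> s)) = nxt \<sigma> s \<longrightarrow> vat k A (set_decode (fst (prod_decode s))) n Z)"
proof -
  let ?I = "set_decode (fst (prod_decode s))" and ?N = "snd (prod_decode s)"
  obtain Y0 where Y0: "Y0 \<in> P" "init_seg Y0 (length \<sigma>) = \<sigma>" using assms unfolding inv_s_def by auto
  obtain Y n where "Y \<in> P \<and> init_seg Y (length \<sigma>) = init_seg Y0 (length \<sigma>) \<and> ?N < n \<and> vat k A ?I n Y"
    using step[OF Y0(1), of \<sigma> ?N ?I] by auto
  hence ex: "\<exists>Yn. fst Yn \<in> P \<and> init_seg (fst Yn) (length \<sigma>) = \<sigma> \<and> ?N < snd Yn \<and> vat k A ?I (snd Yn) (fst Yn)"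
    using Y0 by (intro exI[of _ "(Y, n)"]) auto
  define Yn where "Yn = (SOME Yn. fst Yn \<in> P \<and> init_seg (fst Yn) (length \<sigma>) = \<sigma> \<and> ?N < snd Yn \<and> vat k A ?I (snd Yn) (fst Yn))"
  have Yn: "fst Yn \<in> P \<and> init_seg (fst Yn) (length \<sigma>) = \<sigma> \<and> ?N < snd Yn \<and> vat k A ?I (snd Yn) (fst Yn)"
    unfolding Yn_def by (rule someI_ex[OF ex])
  have nx: "nxt \<sigma> s = init_seg (fst Yn) (Suc (length \<sigma> + k * snd Yn + k))"
    unfolding nxt_def Yn_def Let_def by simp
  show ?thesis
  proof (intro conjI)
    show "inv_s (nxt \<sigma> s)" unfolding inv_s_def nx using Yn by auto
    show "take (length \<sigma>) (nxt \<sigma> s) = \<sigma>" unfolding nx using Yn by (simp add: take_init_seg)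
    show "length \<sigma> < length (nxt \<sigma> s)" unfolding nx by simp
    show "\<exists>n > ?N. \<forall>Z. init_seg Z (length (nxt \<sigma> s)) = nxt \<sigma> s \<longrightarrow> vat k A ?I n Z"
    proof (intro exI[of _ "snd Yn"] conjI allI impI)
      show "?N < snd Yn" using Yn by simp
      fix Z assume "init_seg Z (length (nxt \<sigma> s)) = nxt \<sigma> s"
      hence "init_seg Z (Suc (length \<sigma> + k * snd Yn + k)) = init_seg (fst Yn) (Suc (length \<sigma> + k * snd Yn + k))"
        unfolding nx by simp
      hence "vat k A ?I (snd Yn) Z = vat k A ?I (snd Yn) (fst Yn)" by (rule vat_init) simp
      thus "vat k A ?I (snd Yn) Z" using Yn by simp
    qed
  qed
qed

definition "sq = rec_nat [] (\<lambda>s \<sigma>. nxt \<sigma> s)"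

lemma sq0: "sq 0 = []" and sqS: "sq (Suc s) = nxt (sq s) s"
  by (simp_all add: sq_def)

lemma P_ne: "P \<noteq> {} \<Longrightarrow> inv_s []"
  unfolding inv_s_def by (auto simp: init_seg_def)

context
  assumes Pne: "P \<noteq> {}"
begin

lemma sq_inv: "inv_s (sq s)"
  by (induction s) (auto simp: sq0 sqS P_ne[OF Pne] nxt_props)

lemma sq_len: "s \<le> length (sq s)"
proof (induction s)
  case 0 thus ?case by simp
next
  case (Suc s) thus ?case using nxt_props[OF sq_inv[of s], of s] by (simp add: sqS)
qed

lemma sq_prefix: "s \<le> t \<Longrightarrow> take (length (sq s)) (sq t) = sq s"
proof (induction t)
  case 0 thus ?case by simp
next
  case (Suc t)
  show ?case
  proof (cases "s = Suc t")
    case True thus ?thesis by simp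
  next
    case False
    hence st: "s \<le> t" using Suc by simp
    have p: "take (length (sq t)) (sq (Suc t)) = sq t" "length (sq t) < length (sq (Suc t))"
      using nxt_props[OF sq_inv[of t], of t] by (auto simp: sqS)
    have ls: "length (sq s) \<le> length (sq t)" using Suc.IH[OF st] by (metis length_take min.absorb_iff1 min.commute)
    have "take (length (sq s)) (sq (Suc t)) = take (length (sq s)) (take (length (sq t)) (sq (Suc t)))"
      using ls by (simp add: min_absorb1)
    also have "\<dots> = sq s" using p Suc.IH[OF st] by simp
    finally show ?thesis .
  qed
qed

definition "Ystar = {p. sq (Suc p) ! p}"

lemma Ystar_init: "init_seg Ystar (length (sq s)) = sq s"
proof (rule nth_equalityI)
  show "length (init_seg Ystar (length (sq s))) = length (sq s)" by simp
  fix p assume "p < length (init_seg Ystar (length (sq s)))"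
  hence p: "p < length (sq s)" by simp
  have l1: "Suc p \<le> length (sq (Suc p))" by (rule sq_len)
  let ?t = "max s (Suc p)"
  have a: "sq s ! p = sq ?t ! p"
    using sq_prefix[of s ?t] p by (metis max.cobounded1 nth_take)
  have b: "sq (Suc p) ! p = sq ?t ! p"
    using sq_prefix[of "Suc p" ?t] l1 by (metis Suc_le_lessD max.cobounded2 nth_take)
  show "init_seg Ystar (length (sq s)) ! p = sq s ! p"
    using p a b by (simp add: nth_init_seg Ystar_def)
qed

lemma Ystar_P: "Ystar \<in> P"
proof -
  have "strcode (init_seg Ystar l) \<in> T" for l
  proof -
    obtain Y where Y: "Y \<in> P" "init_seg Y (length (sq l)) = sq l" using sq_inv[of l] unfolding inv_s_def by auto
    have ll: "l \<le> length (sq l)" by (rule sq_len)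
    have "init_seg Ystar l = take l (sq l)" using Ystar_init[of l] ll by (metis take_init_seg)
    also have "\<dots> = init_seg Y l" using Y(2) ll by (metis take_init_seg)
    finally show ?thesis using Y(1) PT by auto
  qed
  thus ?thesis using PT by auto
qed

lemma Ystar_viol: "finite I \<Longrightarrow> viol k A I N Ystar"
proof -
  assume fI: "finite I"
  let ?s = "prod_encode (set_encode I, N)"
  obtain n where n: "n > N" "\<forall>Z. init_seg Z (length (nxt (sq ?s) ?s)) = nxt (sq ?s) ?s \<longrightarrow> vat k A I n Z"
    using nxt_props[OF sq_inv[of ?s], of ?s] fI by auto
  have "init_seg Ystar (length (nxt (sq ?s) ?s)) = nxt (sq ?s) ?s"
    using Ystar_init[of "Suc ?s"] by (simp add: sqS)
  thus ?thesis using n unfolding viol_vat by blast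
qed

lemma contradiction: False
proof -
  define I where "I = {i. i < k \<and> finite (part k Ystar i - A)}"
  define F where "F = (\<Union>i<k. if i \<in> I then part k Ystar i - A else part k Ystar i \<inter> A)"
  have "\<forall>i\<in>{..<k}. finite (if i \<in> I then part k Ystar i - A else part k Ystar i \<inter> A)"
    using noacc[OF Ystar_P] unfolding I_def by auto
  hence fF: "finite F" unfolding F_def by (intro finite_UN_I) auto
  obtain N where N: "\<forall>x\<in>F. x \<le> N" using fF finite_nat_set_iff_bounded_le by auto
  have fI: "finite I" unfolding I_def by simp
  have "\<not> viol k A I N Ystar"
  proof
    assume "viol k A I N Ystar"
    then obtain n i where ni: "n > N" "i < k"
      "(i\<in>I \<and> k*n+i \<in> Ystar \<and> n\<notin>A) \<or> (i\<notin>I \<and> k*n+i\<in>Ystar \<and> n\<in>A)"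
      unfolding viol_def by blast
    hence "n \<in> F" unfolding F_def part_def by auto
    thus False using N ni(1) by auto
  qed
  thus False using Ystar_viol[OF fI] by simp
qed

end
end

lemma part1:
  assumes nT: "\<not> turing_le A C" and c: "is_condition C c"
  shows "\<exists>i. acceptable_part A c i"
proof (rule ccontr)
  assume na: "\<not> (\<exists>i. acceptable_part A c i)"
  obtain k \<sigma>s P where cdef: "c = (k, \<sigma>s, P)" by (cases c) auto
  have k: "0 < k" and Pne: "P \<noteq> {}" and pi: "pi01_class C P" and cp: "\<forall>X\<in>P. codes_partition k X"
    using c unfolding cdef is_condition_def by auto
  obtain T where cT: "comp C (chi T)" and PT: "P = {X. \<forall>n. strcode (init_seg X n) \<in> T}"
    using pi unfolding pi01_class_def by auto
  have cov: "\<And>X n. X \<in> P \<Longrightarrow> \<exists>i<k. k*n+i \<in> X"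
  proof -
    fix X n assume "X \<in> P"
    hence "n \<in> (\<Union>i<k. part k X i)" using cp unfolding codes_partition_def by auto
    thus "\<exists>i<k. k*n+i \<in> X" unfolding part_def by auto
  qed
  have noacc: "\<And>X i. X \<in> P \<Longrightarrow> i < k \<Longrightarrow> finite (part k X i \<inter> A) \<or> finite (part k X i - A)"
    using na unfolding cdef acceptable_part_def by auto
  show False by (rule contradiction[OF k cT PT cov noacc nT Pne])
qed



lemma strcode_inj: "strcode v = strcode w \<Longrightarrow> v = w"
proof (induction v arbitrary: w)
  case Nil thus ?case by (cases w) auto
next
  case (Cons a v)
  then obtain b u where w: "w = b # u" by (cases w) auto
  have e: "2 * strcode v + (if a then 1 else 0) = 2 * strcode u + (if b then 1 else 0)"
    using Cons.prems w by simp
  hence "a = b" by (cases a; cases b) presburger+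
  with e have "strcode v = strcode u" by simp
  with Cons.IH \<open>a = b\<close> show ?case using w by simp
qed

lemma pi01_restrict:
  assumes "pi01_class C Q"
  shows "pi01_class C (Q \<inter> {X. \<Phi> (init_seg X M)})"
proof -
  obtain T where cT: "comp C (chi T)" and QT: "Q = {X. \<forall>n. strcode (init_seg X n) \<in> T}"
    using assms unfolding pi01_class_def by auto
  define Bad where "Bad = strcode ` {w. set w \<subseteq> UNIV \<and> length w = M \<and> \<not> \<Phi> w}"
  have fB: "finite Bad" unfolding Bad_def
    by (rule finite_imageI) (rule finite_subset[OF _ finite_lists_length_eq[of "UNIV :: bool set" M]], auto)
  have "comp C (\<lambda>x. chi T x * (1 - set_encode Bad div 2^x mod 2))"
    by (intro comp_rules comp_chi[OF cT])
  moreover have "chi T x * (1 - set_encode Bad div 2^x mod 2) = chi (T - Bad) x" for x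
  proof -
    have "(set_encode Bad div 2^x mod 2 = 1) = (x \<in> Bad)" using mem_set_decode[of x "set_encode Bad"] fB by simp
    moreover note mod2_cases[of "set_encode Bad div 2^x"]
    ultimately show ?thesis by (auto simp: chi_def)
  qed
  ultimately have c: "comp C (chi (T - Bad))" by simp
  have "Q \<inter> {X. \<Phi> (init_seg X M)} = {X. \<forall>n. strcode (init_seg X n) \<in> T - Bad}"
  proof (intro set_eqI iffI)
    fix X assume X: "X \<in> Q \<inter> {X. \<Phi> (init_seg X M)}"
    show "X \<in> {X. \<forall>n. strcode (init_seg X n) \<in> T - Bad}"
    proof (clarsimp)
      fix n
      show "strcode (init_seg X n) \<in> T \<and> strcode (init_seg X n) \<notin> Bad"
      proof
        show "strcode (init_seg X n) \<in> T" using X QT by auto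
        show "strcode (init_seg X n) \<notin> Bad"
        proof
          assume "strcode (init_seg X n) \<in> Bad"
          then obtain w where "length w = M" "\<not> \<Phi> w" "strcode w = strcode (init_seg X n)" unfolding Bad_def by auto
          hence "w = init_seg X n" "length w = M" "\<not> \<Phi> w" using strcode_inj by auto
          thus False using X by auto
        qed
      qed
    qed
  next
    fix X assume X: "X \<in> {X. \<forall>n. strcode (init_seg X n) \<in> T - Bad}"
    hence "X \<in> Q" using QT by auto
    moreover have "\<Phi> (init_seg X M)"
    proof (rule ccontr)
      assume "\<not> \<Phi> (init_seg X M)"
      hence "strcode (init_seg X M) \<in> Bad" unfolding Bad_def by auto
      thus False using X by auto
    qed
    ultimately show "X \<in> Q \<inter> {X. \<Phi> (init_seg X M)}" by simp
  qed
  thus ?thesis using c unfolding pi01_class_def by blast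
qed

lemma mathias_refl: "mathias_ext \<sigma> Y \<sigma> Y"
  by (simp add: mathias_ext_def)

lemma repl_ext:
  assumes S: "\<forall>p\<in>S. p \<in> Y \<and> length \<tau> \<le> p \<and> p < M" and L: "length \<tau> \<le> M"
  shows "repl Y (\<tau> @ map (\<lambda>p. p \<in> S) [length \<tau>..<M]) \<subseteq> repl Y \<tau>"
proof
  fix n assume n: "n \<in> repl Y (\<tau> @ map (\<lambda>p. p \<in> S) [length \<tau>..<M])"
  show "n \<in> repl Y \<tau>"
  proof (cases "n < length \<tau>")
    case True thus ?thesis using n by (simp add: repl_def nth_append)
  next
    case False
    show ?thesis
    proof (cases "n < M")
      case True
      hence "n \<in> S" using n False L by (simp add: repl_def nth_append)
      thus ?thesis using S False by (simp add: repl_def)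
    next
      case nM: False
      thus ?thesis using n False L by (simp add: repl_def)
    qed
  qed
qed

lemma str_set_ext:
  assumes S: "\<forall>p\<in>S. length \<tau> \<le> p \<and> p < M"
  shows "S \<subseteq> str_set (\<tau> @ map (\<lambda>p. p \<in> S) [length \<tau>..<M])"
proof
  fix p assume p: "p \<in> S"
  hence "length \<tau> \<le> p" "p < M" using S by auto
  thus "p \<in> str_set (\<tau> @ map (\<lambda>p. p \<in> S) [length \<tau>..<M])"
  proof -
    have "[length \<tau>..<M] ! (p - length \<tau>) = p" using \<open>length \<tau> \<le> p\<close> \<open>p < M\<close> by (subst nth_upt) auto
    thus ?thesis using p \<open>length \<tau> \<le> p\<close> \<open>p < M\<close> by (simp add: str_set_def nth_append)
  qed
qed

lemma mathias_trans_same: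
  "mathias_ext \<tau> Y \<sigma> Y \<Longrightarrow> prefix \<tau> \<tau>' \<Longrightarrow> repl Y \<tau>' \<subseteq> repl Y \<tau> \<Longrightarrow> mathias_ext \<tau>' Y \<sigma> Y"
  unfolding mathias_ext_def by (auto intro: prefix_order.trans)

definition "inv2 C A k \<sigma>s P m j \<tau>s Q \<longleftrightarrow> length \<tau>s = k \<and> Q \<subseteq> P \<and> Q \<noteq> {} \<and> pi01_class C Q \<and>
   (\<forall>X\<in>Q. \<forall>i<k. mathias_ext (\<tau>s!i) (part k X i) (\<sigma>s!i) (part k X i)) \<and>
   (\<forall>i<j. forces_Q A (k,\<tau>s,Q) i m \<or> (\<forall>X\<in>Q. \<not> (infinite (part k X i \<inter> A) \<and> infinite (part k X i - A))))"

lemma inv2_step: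
  assumes I: "inv2 C A k \<sigma>s P m j \<tau>s Q" and j: "j < k" and k: "0 < k"
  shows "\<exists>\<tau>s' Q'. inv2 C A k \<sigma>s P m (Suc j) \<tau>s' Q'"
proof (cases "\<exists>X\<in>Q. \<exists>S. finite S \<and> S \<subseteq> part k X j \<and> (\<forall>p\<in>S. length (\<tau>s!j) \<le> p) \<and> m \<le> card (S \<inter> A) \<and> m \<le> card (S - A)")
  case True
  then obtain X S where X: "X \<in> Q" and S: "finite S" "S \<subseteq> part k X j" "\<forall>p\<in>S. length (\<tau>s!j) \<le> p"
    "m \<le> card (S \<inter> A)" "m \<le> card (S - A)" by blast
  define \<tau> where "\<tau> = \<tau>s ! j"
  define M where "M = Suc (Max (insert (length \<tau>) S))"
  have SM: "\<forall>p\<in>S. p < M" using S(1) unfolding M_def by (simp add: le_imp_less_Suc)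
  have LM: "length \<tau> \<le> M" unfolding M_def using S(1) by (meson Max_ge finite_insert insertI1 le_SucI)
  define \<tau>' where "\<tau>' = \<tau> @ map (\<lambda>p. p \<in> S) [length \<tau>..<M]"
  define \<tau>s' where "\<tau>s' = \<tau>s[j := \<tau>']"
  define \<Phi> where "\<Phi> w \<longleftrightarrow> (\<forall>p\<in>S. w ! (k*p+j))" for w
  define Q' where "Q' = Q \<inter> {X. \<Phi> (init_seg X (k*M))}"
  have Q'eq: "Y \<in> Q' \<longleftrightarrow> Y \<in> Q \<and> S \<subseteq> part k Y j" for Y
  proof -
    have "p \<in> S \<Longrightarrow> k*p+j < k*M" for p
    proof -
      assume "p \<in> S"
      hence "Suc p \<le> M" using SM by (simp add: Suc_leI)
      hence a: "k * Suc p \<le> k * M" by (rule mult_le_mono2)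
      have "k * Suc p = k*p + k" by simp
      thus ?thesis using j a by linarith
    qed
    thus ?thesis unfolding Q'_def \<Phi>_def part_def by (auto simp: nth_init_seg)
  qed
  have len: "length \<tau>s = k" using I unfolding inv2_def by simp
  have inv: "inv2 C A k \<sigma>s P m (Suc j) \<tau>s' Q'"
    unfolding inv2_def
  proof (intro conjI)
    show "length \<tau>s' = k" using len by (simp add: \<tau>s'_def)
    show "Q' \<subseteq> P" using I Q'eq unfolding inv2_def by auto
    show "Q' \<noteq> {}" using X S(2) Q'eq by auto
    show "pi01_class C Q'" unfolding Q'_def using I unfolding inv2_def by (intro pi01_restrict) simp
    show "\<forall>Y\<in>Q'. \<forall>i<k. mathias_ext (\<tau>s'!i) (part k Y i) (\<sigma>s!i) (part k Y i)"
    proof (intro ballI allI impI)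
      fix Y i assume Y: "Y \<in> Q'" and i: "i < k"
      have old: "mathias_ext (\<tau>s!i) (part k Y i) (\<sigma>s!i) (part k Y i)" using I Y Q'eq i unfolding inv2_def by auto
      show "mathias_ext (\<tau>s'!i) (part k Y i) (\<sigma>s!i) (part k Y i)"
      proof (cases "i = j")
        case False thus ?thesis using old by (simp add: \<tau>s'_def)
      next
        case True
        have "prefix \<tau> \<tau>'" unfolding \<tau>'_def by simp
        moreover have "repl (part k Y j) \<tau>' \<subseteq> repl (part k Y j) \<tau>"
          unfolding \<tau>'_def using Q'eq[of Y] Y S(3) SM LM unfolding \<tau>_def by (intro repl_ext) auto
        ultimately show ?thesis using old True len j
          by (simp add: \<tau>s'_def \<tau>_def mathias_trans_same)
      qed
    qed
    show "\<forall>i<Suc j. forces_Q A (k,\<tau>s',Q') i m \<or> (\<forall>X\<in>Q'. \<not> (infinite (part k X i \<inter> A) \<and> infinite (part k X i - A)))"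
    proof (intro allI impI)
      fix i assume i: "i < Suc j"
      show "forces_Q A (k,\<tau>s',Q') i m \<or> (\<forall>X\<in>Q'. \<not> (infinite (part k X i \<inter> A) \<and> infinite (part k X i - A)))"
      proof (cases "i = j")
        case True
        have sub: "S \<subseteq> str_set \<tau>'" unfolding \<tau>'_def using S(3) SM unfolding \<tau>_def by (intro str_set_ext) auto
        have "card (S \<inter> A) \<le> card (str_set \<tau>' \<inter> A)" using sub by (intro card_mono) auto
        moreover have "card (S - A) \<le> card (str_set \<tau>' - A)" using sub by (intro card_mono) auto
        ultimately have "forces_Q A (k,\<tau>s',Q') j m"
          using S(4,5) len j by (simp add: forces_Q_def \<tau>s'_def)
        thus ?thesis using True by simp
      next
        case False
        hence ij: "i < j" using i by simp
        hence "forces_Q A (k,\<tau>s,Q) i m \<or> (\<forall>X\<in>Q. \<not> (infinite (part k X i \<inter> A) \<and> infinite (part k X i - A)))"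
          using I unfolding inv2_def by auto
        moreover have "\<tau>s' ! i = \<tau>s ! i" using ij by (simp add: \<tau>s'_def)
        ultimately show ?thesis using Q'eq unfolding forces_Q_def by auto
      qed
    qed
  qed
  thus ?thesis by blast
next
  case False
  have "inv2 C A k \<sigma>s P m (Suc j) \<tau>s Q"
    unfolding inv2_def
  proof (intro conjI)
    show "length \<tau>s = k" "Q \<subseteq> P" "Q \<noteq> {}" "pi01_class C Q"
      "\<forall>X\<in>Q. \<forall>i<k. mathias_ext (\<tau>s!i) (part k X i) (\<sigma>s!i) (part k X i)"
      using I unfolding inv2_def by auto
    show "\<forall>i<Suc j. forces_Q A (k,\<tau>s,Q) i m \<or> (\<forall>X\<in>Q. \<not> (infinite (part k X i \<inter> A) \<and> infinite (part k X i - A)))"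
    proof (intro allI impI)
      fix i assume i: "i < Suc j"
      show "forces_Q A (k,\<tau>s,Q) i m \<or> (\<forall>X\<in>Q. \<not> (infinite (part k X i \<inter> A) \<and> infinite (part k X i - A)))"
      proof (cases "i = j")
        case False thus ?thesis using I i unfolding inv2_def by auto
      next
        case True
        have "\<forall>X\<in>Q. \<not> (infinite (part k X j \<inter> A) \<and> infinite (part k X j - A))"
        proof (intro ballI notI)
          fix X assume X: "X \<in> Q" and inf: "infinite (part k X j \<inter> A) \<and> infinite (part k X j - A)"
          let ?L = "length (\<tau>s!j)"
          have i1: "infinite (part k X j \<inter> A - {..<?L})" using inf by simp
          have i2: "infinite (part k X j - A - {..<?L})" using inf by simp
          obtain S1 where S1: "S1 \<subseteq> part k X j \<inter> A - {..<?L}" "finite S1" "card S1 = m"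
            using infinite_arbitrarily_large[OF i1] by blast
          obtain S2 where S2: "S2 \<subseteq> part k X j - A - {..<?L}" "finite S2" "card S2 = m"
            using infinite_arbitrarily_large[OF i2] by blast
          define S where "S = S1 \<union> S2"
          have "finite S" "S \<subseteq> part k X j" "\<forall>p\<in>S. ?L \<le> p" using S1 S2 unfolding S_def by auto
          moreover have "m \<le> card (S \<inter> A)"
          proof -
            have "S1 \<subseteq> S \<inter> A" using S1 unfolding S_def by auto
            hence "card S1 \<le> card (S \<inter> A)" using \<open>finite S\<close> by (intro card_mono) auto
            thus ?thesis using S1 by simp
          qed
          moreover have "m \<le> card (S - A)"
          proof -
            have "S2 \<subseteq> S - A" using S2 unfolding S_def by auto
            hence "card S2 \<le> card (S - A)" using \<open>finite S\<close> by (intro card_mono) auto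
            thus ?thesis using S2 by simp
          qed
          ultimately show False using False X by blast
        qed
        thus ?thesis using True by simp
      qed
    qed
  qed
  thus ?thesis by blast
qed

lemma part2:
  assumes c: "is_condition C c"
  shows "\<exists>d. is_condition C d \<and> cond_extends d c \<and> (\<forall>i. acceptable_part A d i \<longrightarrow> forces_Q A d i m)"
proof -
  obtain k \<sigma>s P where cdef: "c = (k, \<sigma>s, P)" by (cases c) auto
  have k: "0 < k" and len: "length \<sigma>s = k" and Pne: "P \<noteq> {}" and pi: "pi01_class C P" and cp: "\<forall>X\<in>P. codes_partition k X"
    using c unfolding cdef is_condition_def by auto
  have "j \<le> k \<Longrightarrow> \<exists>\<tau>s Q. inv2 C A k \<sigma>s P m j \<tau>s Q" for j
  proof (induction j)
    case 0
    have "inv2 C A k \<sigma>s P m 0 \<sigma>s P" unfolding inv2_def using len Pne pi by (auto simp: mathias_refl)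
    thus ?case by blast
  next
    case (Suc j)
    then obtain \<tau>s Q where "inv2 C A k \<sigma>s P m j \<tau>s Q" by auto
    thus ?case using inv2_step Suc.prems k by auto
  qed
  then obtain \<tau>s Q where I: "inv2 C A k \<sigma>s P m k \<tau>s Q" by blast
  hence Il: "length \<tau>s = k" "Q \<subseteq> P" "Q \<noteq> {}" "pi01_class C Q"
    "\<forall>X\<in>Q. \<forall>i<k. mathias_ext (\<tau>s!i) (part k X i) (\<sigma>s!i) (part k X i)"
    "\<forall>i<k. forces_Q A (k,\<tau>s,Q) i m \<or> (\<forall>X\<in>Q. \<not> (infinite (part k X i \<inter> A) \<and> infinite (part k X i - A)))"
    unfolding inv2_def by auto
  show ?thesis
  proof (intro exI[of _ "(k, \<tau>s, Q)"] conjI)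
    show "is_condition C (k, \<tau>s, Q)" unfolding is_condition_def using k Il cp by auto
    show "cond_extends (k, \<tau>s, Q) c" unfolding cdef cond_extends_def prod.case
      by (rule exI[of _ "\<lambda>i. i"]) (use Il in blast)
    show "\<forall>i. acceptable_part A (k, \<tau>s, Q) i \<longrightarrow> forces_Q A (k, \<tau>s, Q) i m"
      using Il(6) unfolding acceptable_part_def by auto
  qed
qed

theorem lemma4p1:
  fixes C A :: "nat set"
  assumes "\<not> turing_le A C"
  shows "(\<forall>c. is_condition C c \<longrightarrow> (\<exists>i. acceptable_part A c i)) \<and>
         (\<forall>c m. is_condition C c \<longrightarrow>
            (\<exists>d. is_condition C d \<and> cond_extends d c \<and>
                 (\<forall>i. acceptable_part A d i \<longrightarrow> forces_Q A d i m)))"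
  using part1[OF assms] part2 by blast

end
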